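(* For a nonnegative integer $n$, let $r_{\mathrm{OPT}}(n)$ be the number of optimal $\{0,1,-1\}$-representations of $n$. Then $r_{\mathrm{OPT}}$ is $2$-quasimultiplicative; specifically, for all nonnegative integers $a,b,k$ with $b<2^k$, $$r_{\mathrm{OPT}}(2^{k+3}a+b)=r_{\mathrm{OPT}}(a)\,r_{\mathrm{OPT}}(b).$$
   Context: A $\{0,1,-1\}$-representation of $n$ is an expression $n=\sum_{i\ge0}d_i2^i$ with $d_i\in\{0,1,-1\}$ and only finitely many $d_i\neq0$. It is optimal if its number of nonzero digits is minimal among all $\{0,1,-1\}$-representations of $n$. A function $f$ is $2$-quasimultiplicative if for some nonnegative integer $r$, $f(2^{k+r}a+b)=f(a)f(b)$ whenever $0\le b<2^k$. *)

theory Defs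
  imports Main
begin

definition is_rep :: "nat \<Rightarrow> (nat \<Rightarrow> int) \<Rightarrow> bool" where
  "is_rep n d \<longleftrightarrow> (\<forall>i. d i \<in> {0, 1, -1}) \<and> finite {i. d i \<noteq> 0}
     \<and> (\<Sum>i\<in>{i. d i \<noteq> 0}. d i * 2 ^ i) = int n"

definition weight :: "(nat \<Rightarrow> int) \<Rightarrow> nat" where
  "weight d = card {i. d i \<noteq> 0}"

definition optimal_rep :: "nat \<Rightarrow> (nat \<Rightarrow> int) \<Rightarrow> bool" where
  "optimal_rep n d \<longleftrightarrow> is_rep n d \<and> (\<forall>e. is_rep n e \<longrightarrow> weight d \<le> weight e)"

definition r_opt :: "nat \<Rightarrow> nat" where
  "r_opt n = card {d. optimal_rep n d}"

end

theory Submission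
  imports Defs
begin


function W :: "int \<Rightarrow> nat" where
 "W n = (if n = 0 then 0 else if n = 1 \<or> n = -1 then 1 else if even n then W (n div 2)
    else Suc (min (W ((n-1) div 2)) (W ((n+1) div 2))))"
  by auto
termination
  apply (relation "measure (\<lambda>n. nat \<bar>n\<bar>)")
  apply auto
  apply presburger+
  done

declare W.simps[simp del]

function C :: "int \<Rightarrow> nat" where
 "C n = (if n = 0 then 1 else if n = 1 \<or> n = -1 then 1 else if even n then C (n div 2)
    else if W ((n-1) div 2) < W ((n+1) div 2) then C ((n-1) div 2)
    else if W ((n+1) div 2) < W ((n-1) div 2) then C ((n+1) div 2)
    else C ((n-1) div 2) + C ((n+1) div 2))"
  by auto
termination
  apply (relation "measure (\<lambda>n. nat \<bar>n\<bar>)")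
  apply auto
  apply presburger+
  done

declare C.simps[simp del]

lemma W0[simp]: "W 0 = 0" by (simp add: W.simps)
lemma W1[simp]: "W 1 = 1" by (simp add: W.simps)
lemma Wm1[simp]: "W (-1) = 1" by (simp add: W.simps)
lemma C0[simp]: "C 0 = 1" by (simp add: C.simps)
lemma C1[simp]: "C 1 = 1" by (simp add: C.simps)
lemma Cm1[simp]: "C (-1) = 1" by (simp add: C.simps)

lemma W_even: "even n \<Longrightarrow> W n = W (n div 2)"
  by (cases "n = 0") (auto simp: W.simps[of n])

lemma W_odd: "odd n \<Longrightarrow> W n = Suc (min (W ((n-1) div 2)) (W ((n+1) div 2)))"
proof -
  assume o: "odd n"
  show ?thesis
  proof (cases "n = 1 \<or> n = -1")
    case True then show ?thesis by auto
  next
    case False then show ?thesis using o by (subst W.simps) auto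
  qed
qed

lemma C_even: "even n \<Longrightarrow> C n = C (n div 2)"
  by (cases "n = 0") (auto simp: C.simps[of n])

lemma C_odd: "odd n \<Longrightarrow> C n = (if W ((n-1) div 2) < W ((n+1) div 2) then C ((n-1) div 2)
    else if W ((n+1) div 2) < W ((n-1) div 2) then C ((n+1) div 2)
    else C ((n-1) div 2) + C ((n+1) div 2))"
proof -
  assume o: "odd n"
  show ?thesis
  proof (cases "n = 1 \<or> n = -1")
    case True then show ?thesis by auto
  next
    case False then show ?thesis using o by (subst C.simps) auto
  qed
qed

lemma lt_half: "even (n::int) \<Longrightarrow> n \<noteq> 0 \<Longrightarrow> nat \<bar>n div 2\<bar> < nat \<bar>n\<bar>"
proof -
  assume "even n" "n \<noteq> 0"
  moreover have "n = 2*(n div 2)" using \<open>even n\<close> by presburger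
  ultimately have "\<bar>n div 2\<bar> < \<bar>n\<bar>" by (smt (verit))
  then show ?thesis by simp
qed
lemma lt_lo: "odd (n::int) \<Longrightarrow> n \<noteq> -1 \<Longrightarrow> nat \<bar>(n-1) div 2\<bar> < nat \<bar>n\<bar>"
proof -
  assume "odd n" "n \<noteq> -1"
  moreover have "n - 1 = 2*((n-1) div 2)" using \<open>odd n\<close> by presburger
  moreover have "n \<noteq> 0" using \<open>odd n\<close> by auto
  ultimately have "\<bar>(n-1) div 2\<bar> < \<bar>n\<bar>" by (smt (verit))
  then show ?thesis by simp
qed
lemma lt_hi: "odd (n::int) \<Longrightarrow> n \<noteq> 1 \<Longrightarrow> nat \<bar>(n+1) div 2\<bar> < nat \<bar>n\<bar>"
proof -
  assume "odd n" "n \<noteq> 1"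
  moreover have "n + 1 = 2*((n+1) div 2)" using \<open>odd n\<close> by presburger
  moreover have "n \<noteq> 0" using \<open>odd n\<close> by auto
  ultimately have "\<bar>(n+1) div 2\<bar> < \<bar>n\<bar>" by (smt (verit))
  then show ?thesis by simp
qed

lemma W_adj: "W n \<le> Suc (W (n+1)) \<and> W (n+1) \<le> Suc (W n)"
proof (induction "nat \<bar>n\<bar>" arbitrary: n rule: less_induct)
  case less
  show ?case
  proof (cases "even n")
    case True
    show ?thesis
    proof (cases "n = 0")
      case True then show ?thesis by simp
    next
      case False
      have lt: "nat \<bar>n div 2\<bar> < nat \<bar>n\<bar>" using False True by (intro lt_half)
      have IH: "W (n div 2) \<le> Suc (W (n div 2 + 1))" using less(1)[OF lt] by blast
      have e1: "W n = W (n div 2)" using W_even True by blast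
      have e2: "W (n+1) = Suc (min (W (n div 2)) (W (n div 2 + 1)))"
      proof -
        have "odd (n+1)" using True by simp
        moreover have "(n+1-1) div 2 = n div 2" "(n+1+1) div 2 = n div 2 + 1" using True by presburger+
        ultimately show ?thesis using W_odd[of "n+1"] by (simp add: add.commute)
      qed
      show ?thesis using e1 e2 IH by (auto simp: min_def)
    qed
  next
    case False
    show ?thesis
    proof (cases "n = -1")
      case True then show ?thesis by simp
    next
      case ne: False
      have lt: "nat \<bar>(n-1) div 2\<bar> < nat \<bar>n\<bar>" using ne False by (intro lt_lo)
      have IH: "W ((n-1) div 2 + 1) \<le> Suc (W ((n-1) div 2))" using less(1)[OF lt] by blast
      have ev: "(n-1) div 2 + 1 = (n+1) div 2" using False by presburger
      have e1: "W n = Suc (min (W ((n-1) div 2)) (W ((n+1) div 2)))" using W_odd False by blast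
      have e2: "W (n+1) = W ((n+1) div 2)"
        using W_even[of "n+1"] False by simp
      show ?thesis using e1 e2 IH ev by (auto simp: min_def)
    qed
  qed
qed

lemma W_ge_odd: "W a \<le> W (2*a+1)"
proof -
  have "W (2*a+1) = Suc (min (W a) (W (a+1)))"
    using W_odd[of "2*a+1"] by (simp add: add.commute)
  then show ?thesis using W_adj[of a] by (auto simp: min_def)
qed

lemma W_ge_odd': "W a \<le> W (2*a-1)"
proof -
  have e: "(2*a-1-1) div 2 = a - 1" "(2*a-1+1) div 2 = a" by presburger+
  have "W (2*a-1) = Suc (min (W (a-1)) (W a))"
    using W_odd[of "2*a-1"] e by simp
  then show ?thesis using W_adj[of "a-1"] by (auto simp: min_def)
qed

lemma base_pos: "W (8*a+1) = Suc (W a) \<and> C (8*a+1) = C a"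
proof -
  have w2: "W (2*a) = W a" "C (2*a) = C a" using W_even[of "2*a"] C_even[of "2*a"] by simp_all
  have w4: "W (4*a) = W a" "C (4*a) = C a"
    using W_even[of "4*a"] C_even[of "4*a"] w2 by simp_all
  have e4: "(4*a+1-1) div 2 = 2*a" "(4*a+1+1) div 2 = 2*a+1" by presburger+
  have "W (4*a+1) = Suc (min (W (2*a)) (W (2*a+1)))"
    using W_odd[of "4*a+1"] e4 by (simp add: add.commute)
  then have w41: "W (4*a+1) = Suc (W a)" using w2 W_ge_odd[of a] by (auto simp: min_def)
  have e8: "(8*a+1-1) div 2 = 4*a" "(8*a+1+1) div 2 = 4*a+1" by presburger+
  have "W (8*a+1) = Suc (min (W (4*a)) (W (4*a+1)))"
    using W_odd[of "8*a+1"] e8 by (simp add: add.commute)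
  moreover have "C (8*a+1) = C (4*a)"
    using C_odd[of "8*a+1"] e8 w4 w41 by (simp add: add.commute)
  ultimately show ?thesis using w4 w41 by (auto simp: min_def)
qed

lemma base_neg: "W (8*a-1) = Suc (W a) \<and> C (8*a-1) = C a"
proof -
  have w2: "W (2*a) = W a" "C (2*a) = C a" using W_even[of "2*a"] C_even[of "2*a"] by simp_all
  have w4: "W (4*a) = W a" "C (4*a) = C a"
    using W_even[of "4*a"] C_even[of "4*a"] w2 by simp_all
  have e4: "(4*a-1-1) div 2 = 2*a-1" "(4*a-1+1) div 2 = 2*a" by presburger+
  have "W (4*a-1) = Suc (min (W (2*a-1)) (W (2*a)))"
    using W_odd[of "4*a-1"] e4 by simp
  then have w41: "W (4*a-1) = Suc (W a)" using w2 W_ge_odd'[of a] by (auto simp: min_def)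
  have e8: "(8*a-1-1) div 2 = 4*a-1" "(8*a-1+1) div 2 = 4*a" by presburger+
  have "W (8*a-1) = Suc (min (W (4*a-1)) (W (4*a)))"
    using W_odd[of "8*a-1"] e8 by simp
  moreover have "C (8*a-1) = C (4*a)"
    using C_odd[of "8*a-1"] e8 w4 w41 by simp
  ultimately show ?thesis using w4 w41 by (auto simp: min_def)
qed

lemma gen: "\<bar>b\<bar> \<le> 2^k \<Longrightarrow> W (2^(k+3)*a+b) = W a + W b \<and> C (2^(k+3)*a+b) = C a * C b"
proof (induction k arbitrary: b)
  case 0
  then have "b = 0 \<or> b = 1 \<or> b = -1" by auto
  moreover have "W (8*a) = W a" "C (8*a) = C a"
    using W_even[of "8*a"] W_even[of "4*a"] W_even[of "2*a"]
      C_even[of "8*a"] C_even[of "4*a"] C_even[of "2*a"] by simp_all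
  ultimately show ?case using base_pos[of a] base_neg[of a] by auto
next
  case (Suc k)
  define P where "P = (2::int)^(k+3)*a"
  define M where "M = (2::int)^k"
  have N: "2^(Suc k+3)*a + b = 2*P + b" unfolding P_def by (simp add: power_add)
  have bM: "\<bar>b\<bar> \<le> 2*M" using Suc.prems unfolding M_def by simp
  show ?case
  proof (cases "even b")
    case True
    have d: "(2*P+b) div 2 = P + b div 2" using True by presburger
    have b2: "b = 2*(b div 2)" using True by presburger
    have bd: "\<bar>b div 2\<bar> \<le> 2^k" using bM b2 unfolding M_def by (smt (verit))
    have IH: "W (P + b div 2) = W a + W (b div 2) \<and> C (P + b div 2) = C a * C (b div 2)"
      using Suc.IH[OF bd] unfolding P_def .
    have "W (2*P+b) = W (P + b div 2)" "C (2*P+b) = C (P + b div 2)"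
      using W_even[of "2*P+b"] C_even[of "2*P+b"] True d by simp_all
    moreover have "W b = W (b div 2)" "C b = C (b div 2)" using W_even C_even True by auto
    ultimately show ?thesis using N IH by simp
  next
    case False
    have d1: "(2*P+b-1) div 2 = P + (b-1) div 2" using False by presburger
    have d2: "(2*P+b+1) div 2 = P + (b+1) div 2" using False by presburger
    have b1: "b - 1 = 2*((b-1) div 2)" "b + 1 = 2*((b+1) div 2)" using False by presburger+
    have bd1: "\<bar>(b-1) div 2\<bar> \<le> 2^k" using bM b1 False unfolding M_def
      by (smt (verit) odd_iff_mod_2_eq_one)
    have bd2: "\<bar>(b+1) div 2\<bar> \<le> 2^k" using bM b1 False unfolding M_def
      by (smt (verit) odd_iff_mod_2_eq_one)
    have IH1: "W (P + (b-1) div 2) = W a + W ((b-1) div 2) \<and> C (P + (b-1) div 2) = C a * C ((b-1) div 2)"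
      using Suc.IH[OF bd1] unfolding P_def .
    have IH2: "W (P + (b+1) div 2) = W a + W ((b+1) div 2) \<and> C (P + (b+1) div 2) = C a * C ((b+1) div 2)"
      using Suc.IH[OF bd2] unfolding P_def .
    have o: "odd (2*P+b)" using False by simp
    have "W (2*P+b) = Suc (min (W (P + (b-1) div 2)) (W (P + (b+1) div 2)))"
      using W_odd[OF o] d1 d2 by simp
    moreover have "C (2*P+b) = (if W (P + (b-1) div 2) < W (P + (b+1) div 2) then C (P + (b-1) div 2)
    else if W (P + (b+1) div 2) < W (P + (b-1) div 2) then C (P + (b+1) div 2)
    else C (P + (b-1) div 2) + C (P + (b+1) div 2))"
      using C_odd[OF o] d1 d2 by simp
    moreover note W_odd[OF False] C_odd[OF False]
    ultimately show ?thesis using N IH1 IH2 by (auto simp: min_def algebra_simps)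
  qed
qed



lemma fnb: "finite (S::nat set) \<Longrightarrow> \<exists>k. S \<subseteq> {..<k}"
  using finite_nat_set_iff_bounded by auto

definition val :: "(nat \<Rightarrow> int) \<Rightarrow> int" where
  "val d = (\<Sum>i\<in>{i. d i \<noteq> 0}. d i * 2 ^ i)"

definition Reps :: "int \<Rightarrow> (nat \<Rightarrow> int) set" where
  "Reps n = {d. (\<forall>i. d i \<in> {0, 1, -1}) \<and> finite {i. d i \<noteq> 0} \<and> val d = n}"

definition dtl :: "(nat \<Rightarrow> int) \<Rightarrow> nat \<Rightarrow> int" where
  "dtl d = (\<lambda>i. d (Suc i))"

definition dcons :: "int \<Rightarrow> (nat \<Rightarrow> int) \<Rightarrow> nat \<Rightarrow> int" where
  "dcons c e = (\<lambda>i. case i of 0 \<Rightarrow> c | Suc j \<Rightarrow> e j)"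

lemma dtl_dcons[simp]: "dtl (dcons c e) = e" by (simp add: dtl_def dcons_def)
lemma dcons_0[simp]: "dcons c e 0 = c" by (simp add: dcons_def)
lemma dcons_dtl: "dcons (d 0) (dtl d) = d"
  by (rule ext) (simp add: dcons_def dtl_def split: nat.split)
lemma inj_dcons: "inj (dcons c)"
  by (metis dtl_dcons injI)

lemma is_rep_Reps: "is_rep n d \<longleftrightarrow> d \<in> Reps (int n)"
  by (simp add: is_rep_def Reps_def val_def)

lemma val_bound: "{i. d i \<noteq> 0} \<subseteq> {..<M} \<Longrightarrow> val d = (\<Sum>i<M. d i * 2 ^ i)"
  unfolding val_def by (rule sum.mono_neutral_left) auto

lemma fin_tl: "finite {i. d i \<noteq> 0} \<Longrightarrow> finite {i. dtl d i \<noteq> 0}"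
proof -
  assume f: "finite {i. d i \<noteq> 0}"
  have "{i. dtl d i \<noteq> 0} = Suc -` {i. d i \<noteq> 0}" by (auto simp: dtl_def)
  then show ?thesis using finite_vimageI[OF f inj_Suc] by simp
qed

lemma supp_split: "{i. d i \<noteq> 0} = (if d 0 = 0 then {} else {0}) \<union> Suc ` {i. dtl d i \<noteq> 0}"
proof (rule set_eqI)
  fix i show "i \<in> {i. d i \<noteq> 0} \<longleftrightarrow> i \<in> (if d 0 = 0 then {} else {0}) \<union> Suc ` {i. dtl d i \<noteq> 0}"
    by (cases i) (auto simp: dtl_def)
qed

lemma fin_from_tl: "finite {i. dtl d i \<noteq> 0} \<Longrightarrow> finite {i. d i \<noteq> 0}"
  by (subst supp_split) auto

lemma val_step: "finite {i. d i \<noteq> 0} \<Longrightarrow> val d = d 0 + 2 * val (dtl d)"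
proof -
  assume f: "finite {i. d i \<noteq> 0}"
  obtain M where M: "{i. d i \<noteq> 0} \<subseteq> {..<M}" using fnb[OF f] by blast
  have M1: "{i. d i \<noteq> 0} \<subseteq> {..<Suc M}" using M by auto
  have M2: "{i. dtl d i \<noteq> 0} \<subseteq> {..<M}" using M by (auto simp: dtl_def)
  have "val d = (\<Sum>i<Suc M. d i * 2 ^ i)" using val_bound[OF M1] .
  also have "\<dots> = d 0 + (\<Sum>i<M. d (Suc i) * 2 ^ Suc i)"
    by (subst sum.lessThan_Suc_shift) simp
  also have "\<dots> = d 0 + 2 * (\<Sum>i<M. dtl d i * 2 ^ i)"
    by (simp add: sum_distrib_left dtl_def algebra_simps)
  also have "\<dots> = d 0 + 2 * val (dtl d)" using val_bound[OF M2] by simp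
  finally show ?thesis .
qed

lemma weight_step: "finite {i. d i \<noteq> 0} \<Longrightarrow> weight d = (if d 0 = 0 then 0 else 1) + weight (dtl d)"
proof -
  assume f: "finite {i. d i \<noteq> 0}"
  have ft: "finite (Suc ` {i. dtl d i \<noteq> 0})" using fin_tl[OF f] by simp
  have "weight d = card ((if d 0 = 0 then {} else {0}) \<union> Suc ` {i. dtl d i \<noteq> 0})"
    unfolding weight_def by (subst supp_split) simp
  also have "\<dots> = card (if d 0 = 0 then {} else {0::nat}) + card (Suc ` {i. dtl d i \<noteq> 0})"
    by (rule card_Un_disjoint) (use ft in auto)
  also have "\<dots> = (if d 0 = 0 then 0 else 1) + weight (dtl d)"
    by (simp add: card_image weight_def)
  finally show ?thesis .
qed

lemma Reps_step: "d \<in> Reps n \<longleftrightarrow> d 0 \<in> {0, 1, -1} \<and> 2 dvd (n - d 0) \<and> dtl d \<in> Reps ((n - d 0) div 2)"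
proof
  assume d: "d \<in> Reps n"
  then have f: "finite {i. d i \<noteq> 0}" by (simp add: Reps_def)
  have v: "n = d 0 + 2 * val (dtl d)" using val_step[OF f] d by (simp add: Reps_def)
  show "d 0 \<in> {0, 1, -1} \<and> 2 dvd (n - d 0) \<and> dtl d \<in> Reps ((n - d 0) div 2)"
    using d fin_tl[OF f] v by (auto simp: Reps_def dtl_def)
next
  assume a: "d 0 \<in> {0, 1, -1} \<and> 2 dvd (n - d 0) \<and> dtl d \<in> Reps ((n - d 0) div 2)"
  then have ft: "finite {i. dtl d i \<noteq> 0}" by (simp add: Reps_def)
  have f: "finite {i. d i \<noteq> 0}" using fin_from_tl[OF ft] .
  have dig: "\<forall>i. d i \<in> {0, 1, -1}"
  proof
    fix i show "d i \<in> {0, 1, -1}" using a by (cases i) (auto simp: Reps_def dtl_def)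
  qed
  have "val d = d 0 + 2 * ((n - d 0) div 2)" using val_step[OF f] a by (simp add: Reps_def)
  also have "\<dots> = n" using a by auto
  finally show "d \<in> Reps n" using dig f by (simp add: Reps_def)
qed



lemma dcons_Reps: "dcons c e \<in> Reps n \<longleftrightarrow> c \<in> {0, 1, -1} \<and> 2 dvd (n - c) \<and> e \<in> Reps ((n - c) div 2)"
  using Reps_step[of "dcons c e" n] by simp

lemma Reps_fin: "d \<in> Reps n \<Longrightarrow> finite {i. d i \<noteq> 0}" by (simp add: Reps_def)

lemma weight_dcons: "e \<in> Reps m \<Longrightarrow> weight (dcons c e) = (if c = 0 then 0 else 1) + weight e"
proof -
  assume "e \<in> Reps m"
  then have "finite {i. dcons c e i \<noteq> 0}" using fin_from_tl[of "dcons c e"] Reps_fin by simp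
  then show ?thesis using weight_step[of "dcons c e"] by simp
qed

lemma zero_Reps: "(\<lambda>_. 0) \<in> Reps 0" by (simp add: Reps_def val_def)

lemma lb_aux: "{i. d i \<noteq> 0} \<subseteq> {..<M} \<Longrightarrow> d \<in> Reps n \<Longrightarrow> W n \<le> weight d"
proof (induction M arbitrary: d n)
  case 0
  then have "{i. d i \<noteq> 0} = {}" by auto
  then have "val d = 0" by (simp add: val_def)
  moreover have "val d = n" using 0(2) unfolding Reps_def by blast
  ultimately have "n = 0" by simp
  then show ?case by simp
next
  case (Suc M)
  have f: "finite {i. d i \<noteq> 0}" using Suc.prems(2) by (rule Reps_fin)
  have st: "d 0 \<in> {0, 1, -1} \<and> 2 dvd (n - d 0) \<and> dtl d \<in> Reps ((n - d 0) div 2)"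
    using Suc.prems(2) Reps_step[of d n] by simp
  have sub: "{i. dtl d i \<noteq> 0} \<subseteq> {..<M}" using Suc.prems(1) by (auto simp: dtl_def)
  have IH: "W ((n - d 0) div 2) \<le> weight (dtl d)" using Suc.IH[OF sub] st by blast
  have ws: "weight d = (if d 0 = 0 then 0 else 1) + weight (dtl d)" using weight_step[OF f] .
  have dv: "2 dvd (n - d 0)" using st by blast
  consider "d 0 = 0" | "d 0 = 1" | "d 0 = -1" using st by blast
  then show ?case
  proof cases
    case 1
    then have e: "even n" using dv by simp
    have "W n = W ((n - d 0) div 2)" using W_even[OF e] 1 by simp
    then show ?thesis using IH ws 1 by simp
  next
    case 2
    then have o: "odd n" using dv by (simp add: even_diff_iff)
    have "W n = Suc (min (W ((n - 1) div 2)) (W ((n+1) div 2)))" using W_odd[OF o] .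
    then have "W n \<le> Suc (W ((n - d 0) div 2))" using 2 by simp
    then show ?thesis using IH ws 2 by simp
  next
    case 3
    then have o: "odd n" using dv by (simp add: even_diff_iff)
    have "W n = Suc (min (W ((n - 1) div 2)) (W ((n+1) div 2)))" using W_odd[OF o] .
    then have "W n \<le> Suc (W ((n - d 0) div 2))" using 3 by simp
    then show ?thesis using IH ws 3 by simp
  qed
qed

lemma ex_opt: "\<exists>d\<in>Reps n. weight d = W n"
proof (induction "nat \<bar>n\<bar>" arbitrary: n rule: less_induct)
  case less
  show ?case
  proof (cases "n = 0")
    case True
    then show ?thesis using zero_Reps by (intro bexI[of _ "\<lambda>_. 0"]) (auto simp: weight_def)
  next
    case n0: False
    show ?thesis
    proof (cases "n = 1 \<or> n = -1")
      case True
      then show ?thesis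
      proof
        assume n: "n = 1"
        have "dcons 1 (\<lambda>_. 0) \<in> Reps n" using zero_Reps n by (simp add: dcons_Reps)
        moreover have "weight (dcons 1 (\<lambda>_. 0)) = 1"
          using weight_dcons[OF zero_Reps] by (simp add: weight_def)
        ultimately show ?thesis using n by auto
      next
        assume n: "n = -1"
        have "dcons (-1) (\<lambda>_. 0) \<in> Reps n" using zero_Reps n by (simp add: dcons_Reps)
        moreover have "weight (dcons (-1) (\<lambda>_. 0)) = 1"
          using weight_dcons[OF zero_Reps] by (simp add: weight_def)
        ultimately show ?thesis using n by auto
      qed
    next
      case n1: False
      show ?thesis
      proof (cases "even n")
        case True
        obtain e where e: "e \<in> Reps (n div 2)" "weight e = W (n div 2)"
          using less(1)[OF lt_half[OF True n0]] by blast
        have "dcons 0 e \<in> Reps n" using e True by (simp add: dcons_Reps)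
        moreover have "weight (dcons 0 e) = W n" using weight_dcons[OF e(1)] e W_even[OF True] by simp
        ultimately show ?thesis by blast
      next
        case False
        show ?thesis
        proof (cases "W ((n-1) div 2) \<le> W ((n+1) div 2)")
          case True
          obtain e where e: "e \<in> Reps ((n-1) div 2)" "weight e = W ((n-1) div 2)"
            using less(1)[OF lt_lo[OF False]] n1 by blast
          have "dcons 1 e \<in> Reps n" using e False by (simp add: dcons_Reps; presburger)
          moreover have "weight (dcons 1 e) = W n"
            using weight_dcons[OF e(1)] e W_odd[OF False] True by (simp add: min_def)
          ultimately show ?thesis by blast
        next
          case le: False
          obtain e where e: "e \<in> Reps ((n+1) div 2)" "weight e = W ((n+1) div 2)"
            using less(1)[OF lt_hi[OF False]] n1 by blast
          have "dcons (-1) e \<in> Reps n" using e False by (simp add: dcons_Reps; presburger)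
          moreover have "weight (dcons (-1) e) = W n"
            using weight_dcons[OF e(1)] e W_odd[OF False] le by (simp add: min_def)
          ultimately show ?thesis by blast
        qed
      qed
    qed
  qed
qed



lemma lb: "d \<in> Reps n \<Longrightarrow> W n \<le> weight d"
proof -
  assume d: "d \<in> Reps n"
  obtain M where "{i. d i \<noteq> 0} \<subseteq> {..<M}" using fnb[OF Reps_fin[OF d]] by blast
  then show ?thesis using lb_aux d by blast
qed

definition S :: "int \<Rightarrow> (nat \<Rightarrow> int) set" where
  "S n = {d \<in> Reps n. weight d = W n}"

lemma weight0_zero: "finite {i. d i \<noteq> 0} \<Longrightarrow> weight d = 0 \<Longrightarrow> d = (\<lambda>_. 0)"
  unfolding weight_def by auto

lemma S0: "S 0 = {\<lambda>_. 0}"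
proof
  show "S 0 \<subseteq> {\<lambda>_. 0}" using weight0_zero Reps_fin by (auto simp: S_def)
  show "{\<lambda>_. 0} \<subseteq> S 0" using zero_Reps by (auto simp: S_def weight_def)
qed

lemma S_even: "even n \<Longrightarrow> S n = dcons 0 ` S (n div 2)"
proof
  assume e: "even n"
  show "S n \<subseteq> dcons 0 ` S (n div 2)"
  proof
    fix d assume d: "d \<in> S n"
    then have dR: "d \<in> Reps n" and dw: "weight d = W n" by (auto simp: S_def)
    have st: "d 0 \<in> {0, 1, -1} \<and> 2 dvd (n - d 0) \<and> dtl d \<in> Reps ((n - d 0) div 2)"
      using dR Reps_step[of d n] by simp
    have d0: "d 0 = 0" using st e by (auto simp: even_diff_iff)
    have tR: "dtl d \<in> Reps (n div 2)" using st d0 by simp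
    have "weight d = weight (dtl d)" using weight_step[OF Reps_fin[OF dR]] d0 by simp
    then have "dtl d \<in> S (n div 2)" using tR dw W_even[OF e] by (simp add: S_def)
    moreover have "d = dcons 0 (dtl d)" using dcons_dtl[of d] d0 by simp
    ultimately show "d \<in> dcons 0 ` S (n div 2)" by blast
  qed
  show "dcons 0 ` S (n div 2) \<subseteq> S n"
  proof
    fix d assume "d \<in> dcons 0 ` S (n div 2)"
    then obtain e where e1: "e \<in> Reps (n div 2)" "weight e = W (n div 2)" and d: "d = dcons 0 e"
      by (auto simp: S_def)
    have "d \<in> Reps n" using e1 d e by (simp add: dcons_Reps)
    moreover have "weight d = W n" using weight_dcons[OF e1(1)] e1 d W_even[OF e] by simp
    ultimately show "d \<in> S n" by (simp add: S_def)
  qed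
qed

lemma S_odd: "odd n \<Longrightarrow> S n = dcons 1 ` {e \<in> Reps ((n-1) div 2). Suc (weight e) = W n}
   \<union> dcons (-1) ` {e \<in> Reps ((n+1) div 2). Suc (weight e) = W n}"
proof
  assume o: "odd n"
  show "S n \<subseteq> dcons 1 ` {e \<in> Reps ((n-1) div 2). Suc (weight e) = W n}
   \<union> dcons (-1) ` {e \<in> Reps ((n+1) div 2). Suc (weight e) = W n}"
  proof
    fix d assume d: "d \<in> S n"
    then have dR: "d \<in> Reps n" and dw: "weight d = W n" by (auto simp: S_def)
    have st: "d 0 \<in> {0, 1, -1} \<and> 2 dvd (n - d 0) \<and> dtl d \<in> Reps ((n - d 0) div 2)"
      using dR Reps_step[of d n] by simp
    have d0: "d 0 \<noteq> 0" using st o by auto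
    have ws: "weight d = Suc (weight (dtl d))" using weight_step[OF Reps_fin[OF dR]] d0 by simp
    have dd: "d = dcons (d 0) (dtl d)" using dcons_dtl[of d] by simp
    consider "d 0 = 1" | "d 0 = -1" using st d0 by blast
    then show "d \<in> dcons 1 ` {e \<in> Reps ((n-1) div 2). Suc (weight e) = W n}
   \<union> dcons (-1) ` {e \<in> Reps ((n+1) div 2). Suc (weight e) = W n}"
    proof cases
      case 1
      have t: "dtl d \<in> Reps ((n-1) div 2)" using st 1 by metis
      have "Suc (weight (dtl d)) = W n" using ws dw by simp
      then have "dtl d \<in> {e \<in> Reps ((n-1) div 2). Suc (weight e) = W n}" using t by blast
      moreover have "d = dcons 1 (dtl d)" using dd 1 by simp
      ultimately show ?thesis by (intro UnI1) (rule image_eqI)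
    next
      case 2
      have t: "dtl d \<in> Reps ((n+1) div 2)" using st 2 by (metis diff_minus_eq_add)
      have "Suc (weight (dtl d)) = W n" using ws dw by simp
      then have "dtl d \<in> {e \<in> Reps ((n+1) div 2). Suc (weight e) = W n}" using t by blast
      moreover have "d = dcons (-1) (dtl d)" using dd 2 by simp
      ultimately show ?thesis by (intro UnI2) (rule image_eqI)
    qed
  qed
  show "dcons 1 ` {e \<in> Reps ((n-1) div 2). Suc (weight e) = W n}
   \<union> dcons (-1) ` {e \<in> Reps ((n+1) div 2). Suc (weight e) = W n} \<subseteq> S n"
  proof
    fix d assume "d \<in> dcons 1 ` {e \<in> Reps ((n-1) div 2). Suc (weight e) = W n}
   \<union> dcons (-1) ` {e \<in> Reps ((n+1) div 2). Suc (weight e) = W n}"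
    then show "d \<in> S n"
    proof
      assume "d \<in> dcons 1 ` {e \<in> Reps ((n-1) div 2). Suc (weight e) = W n}"
      then obtain e where e: "e \<in> Reps ((n-1) div 2)" "Suc (weight e) = W n" "d = dcons 1 e" by auto
      have "d \<in> Reps n" using e o by (simp add: dcons_Reps)
      moreover have "weight d = W n" using weight_dcons[OF e(1)] e by simp
      ultimately show ?thesis by (simp add: S_def)
    next
      assume "d \<in> dcons (-1) ` {e \<in> Reps ((n+1) div 2). Suc (weight e) = W n}"
      then obtain e where e: "e \<in> Reps ((n+1) div 2)" "Suc (weight e) = W n" "d = dcons (-1) e" by auto
      have "d \<in> Reps n" using e o by (simp add: dcons_Reps)
      moreover have "weight d = W n" using weight_dcons[OF e(1)] e by simp
      ultimately show ?thesis by (simp add: S_def)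
    qed
  qed
qed

lemma dcons_neq: "dcons 1 x \<noteq> dcons (-1) y"
proof
  assume "dcons 1 x = dcons (-1) y"
  then have "dcons 1 x 0 = dcons (-1) y 0" by simp
  then show False by simp
qed

lemma card_S: "finite (S n) \<and> card (S n) = C n"
proof (induction "nat \<bar>n\<bar>" arbitrary: n rule: less_induct)
  case less
  show ?case
  proof (cases "n = 0")
    case True then show ?thesis using S0 by simp
  next
    case n0: False
    show ?thesis
    proof (cases "even n")
      case True
      have IH: "finite (S (n div 2)) \<and> card (S (n div 2)) = C (n div 2)"
        using less(1)[OF lt_half[OF True n0]] .
      show ?thesis using IH S_even[OF True] C_even[OF True]
        by (simp add: card_image inj_on_subset[OF inj_dcons])
    next
      case False
      define lo where "lo = (n-1) div 2"
      define hi where "hi = (n+1) div 2"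
      define A where "A = {e \<in> Reps lo. Suc (weight e) = W n}"
      define B where "B = {e \<in> Reps hi. Suc (weight e) = W n}"
      have Sn: "S n = dcons 1 ` A \<union> dcons (-1) ` B" using S_odd[OF False] unfolding A_def B_def lo_def hi_def .
      have Wn: "W n = Suc (min (W lo) (W hi))" using W_odd[OF False] unfolding lo_def hi_def .
      have Cn: "C n = (if W lo < W hi then C lo else if W hi < W lo then C hi else C lo + C hi)"
        using C_odd[OF False] unfolding lo_def hi_def .
      have Am: "A = S lo" if h: "W lo \<le> W hi"
      proof -
        have "W n = Suc (W lo)" using Wn h by (simp add: min_def)
        then show ?thesis unfolding A_def S_def by simp
      qed
      have Bm: "B = S hi" if h: "W hi \<le> W lo"
      proof -
        have "W n = Suc (W hi)" using Wn h by (simp add: min_def)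
        then show ?thesis unfolding B_def S_def by simp
      qed
      have A0: "A = {}" if h: "W hi < W lo"
      proof -
        { fix e assume "e \<in> A"
          then have "e \<in> Reps lo" "Suc (weight e) = W n" by (auto simp: A_def)
          then have False using lb[of e lo] Wn h by (simp add: min_def) }
        then show ?thesis by blast
      qed
      have B0: "B = {}" if h: "W lo < W hi"
      proof -
        { fix e assume "e \<in> B"
          then have "e \<in> Reps hi" "Suc (weight e) = W n" by (auto simp: B_def)
          then have False using lb[of e hi] Wn h by (simp add: min_def) }
        then show ?thesis by blast
      qed
      have IHlo: "n \<noteq> -1 \<Longrightarrow> finite (S lo) \<and> card (S lo) = C lo"
        using less(1)[OF lt_lo[OF False]] unfolding lo_def by blast
      have IHhi: "n \<noteq> 1 \<Longrightarrow> finite (S hi) \<and> card (S hi) = C hi"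
        using less(1)[OF lt_hi[OF False]] unfolding hi_def by blast
      have injl: "inj_on (dcons c) X" for c X
        by (rule inj_on_subset[OF inj_dcons]) simp
      consider "W lo < W hi" | "W hi < W lo" | "W lo = W hi" by linarith
      then show ?thesis
      proof cases
        case 1
        have "n \<noteq> -1" using 1 unfolding lo_def hi_def by auto
        then show ?thesis using IHlo Am B0 1 Sn Cn by (simp add: card_image injl)
      next
        case 2
        have "n \<noteq> 1" using 2 unfolding lo_def hi_def by auto
        then show ?thesis using IHhi Bm A0 2 Sn Cn by (simp add: card_image injl)
      next
        case 3
        have "n \<noteq> 1" "n \<noteq> -1" using 3 unfolding lo_def hi_def by auto
        then have f: "finite (S lo)" "finite (S hi)" "card (S lo) = C lo" "card (S hi) = C hi"
          using IHlo IHhi by auto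
        have disj: "dcons 1 ` A \<inter> dcons (-1) ` B = {}"
          using dcons_neq by blast
        have "card (S n) = card (dcons 1 ` A) + card (dcons (-1) ` B)"
          unfolding Sn using f Am Bm 3 disj by (intro card_Un_disjoint) auto
        also have "\<dots> = C n" using f Am Bm 3 Cn by (simp add: card_image injl)
        finally show ?thesis using Sn f Am Bm 3 by simp
      qed
    qed
  qed
qed

lemma r_opt_C: "r_opt n = C (int n)"
proof -
  have "{d. optimal_rep n d} = S (int n)"
  proof (rule set_eqI)
    fix d
    show "d \<in> {d. optimal_rep n d} \<longleftrightarrow> d \<in> S (int n)"
    proof
      assume "d \<in> {d. optimal_rep n d}"
      then have d: "d \<in> Reps (int n)" "\<forall>e\<in>Reps (int n). weight d \<le> weight e"
        by (auto simp: optimal_rep_def is_rep_Reps)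
      obtain e where "e \<in> Reps (int n)" "weight e = W (int n)" using ex_opt by blast
      then have "weight d = W (int n)" using d lb[OF d(1)] by force
      then show "d \<in> S (int n)" using d by (simp add: S_def)
    next
      assume "d \<in> S (int n)"
      then show "d \<in> {d. optimal_rep n d}"
        using lb by (auto simp: optimal_rep_def is_rep_Reps S_def)
    qed
  qed
  then show ?thesis using card_S by (simp add: r_opt_def)
qed

theorem lemma2:
  fixes a b k :: nat
  assumes "b < 2 ^ k"
  shows "r_opt (2 ^ (k + 3) * a + b) = r_opt a * r_opt b"
proof -
  have bb: "\<bar>int b\<bar> \<le> 2 ^ k" using assms
    by (metis abs_of_nat less_imp_le of_nat_le_iff of_nat_numeral of_nat_power)
  have "int (2 ^ (k + 3) * a + b) = 2 ^ (k+3) * int a + int b" by simp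
  then show ?thesis using gen[OF bb, of "int a"] by (simp add: r_opt_C)
qed


end
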